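(* With $B_n$ as in the context and $L_n=|B_n|$, one has $\lim_{n\to\infty} L_{n+1}/L_n=\alpha$, where $\alpha\approx 2.20557$ is the unique real root of $x^3-2x^2-1=0$.
   Context: Generation operator: for a finite vector $R=\langle r_1,\dots,r_m\rangle$ of positive integers and $s\in\{1,3\}$, $\mathcal{G}(R,s)= s^{r_1}\,(4-s)^{r_2}\,s^{r_3}\cdots$ (the $i$-th run consists of $r_i$ copies of $s$ if $i$ is odd and of $4-s$ if $i$ is even), of length $\sum_i r_i$. For a finite word $W$ over $\{1,3\}$, $R(W)$ denotes $W$ itself regarded as a vector of positive integers. Define $B_1=\mathcal{G}(\langle 1,3,3,3,1\rangle,1)=1\,3\,3\,3\,1\,1\,1\,3\,3\,3\,1$, $P_1=3$, and for $n\ge1$: $B_{n+1}=B_n\,P_n\,B_n$ (concatenation), $P_{n+1}=\mathcal{G}(R(P_n),3)$. *)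

theory Defs
  imports Complex_Main
begin

fun gen :: "nat list \<Rightarrow> nat \<Rightarrow> nat list" where
  "gen [] s = []"
| "gen (r # rs) s = replicate r s @ gen rs (4 - s)"

text \<open>BPk k = (B_{k+1}, P_{k+1}).\<close>
primrec BPk :: "nat \<Rightarrow> nat list \<times> nat list" where
  "BPk 0 = (gen [1,3,3,3,1] 1, [3])"
| "BPk (Suc k) = (let (b, p) = BPk k in (b @ p @ b, gen p 3))"

text \<open>B n and P n for n \<ge> 1 (the value at n = 0 is irrelevant).\<close>
definition B :: "nat \<Rightarrow> nat list" where
  "B n = fst (BPk (n - 1))"

definition P :: "nat \<Rightarrow> nat list" where
  "P n = snd (BPk (n - 1))"

definition L :: "nat \<Rightarrow> nat" where
  "L n = length (B n)"

end

theory Submission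
  imports Defs
begin

lemma gen_append: "s \<le> 4 \<Longrightarrow> gen (xs @ ys) s = gen xs s @ gen ys (if even (length xs) then s else 4 - s)"
  by (induction xs arbitrary: s) auto

lemma length_gen: "length (gen rs s) = sum_list rs"
  by (induction rs arbitrary: s) auto

lemma set_gen: "s \<le> 4 \<Longrightarrow> set (gen rs s) \<subseteq> {s, 4 - s}"
proof (induction rs arbitrary: s)
  case Nil then show ?case by simp
next
  case (Cons r rs)
  have "set (gen rs (4 - s)) \<subseteq> {4 - s, 4 - (4 - s)}" using Cons.IH[of "4 - s"] by simp
  moreover have "4 - (4 - s) = s" using Cons.prems by simp
  ultimately show ?case by auto
qed

lemma parity_sum: "set xs \<subseteq> {1,3::nat} \<Longrightarrow> even (sum_list xs) = even (length xs)"
  by (induction xs) auto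

definition PP where "PP k = snd (BPk k)"
definition BB where "BB k = fst (BPk k)"

lemma BPk_Suc': "BPk (Suc k) = (fst (BPk k) @ snd (BPk k) @ fst (BPk k), gen (snd (BPk k)) 3)"
  proof -
  obtain b p where "BPk k = (b, p)" by force
  then show ?thesis by simp
qed

lemma PP_Suc: "PP (Suc k) = gen (PP k) 3"
  unfolding PP_def BPk_Suc' by simp

lemma BB_Suc: "BB (Suc k) = BB k @ PP k @ BB k"
  unfolding PP_def BB_def BPk_Suc' by simp

lemma PP0: "PP 0 = [3]" by (simp add: PP_def)
lemma BB0: "length (BB 0) = 11" by (simp add: BB_def)

lemma PP_set: "set (PP k) \<subseteq> {1,3}"
proof (induction k)
  case 0 then show ?case by (simp add: PP0)
next
  case (Suc k) then show ?case using set_gen[of 3 "PP k"] by (auto simp: PP_Suc)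
qed

lemma PP_odd: "odd (length (PP k))"
proof (induction k)
  case 0 then show ?case by (simp add: PP0)
next
  case (Suc k) then show ?case using parity_sum[OF PP_set[of k]] by (simp add: PP_Suc length_gen)
qed

lemma PP_struct: "PP (k+3) = PP (k+2) @ [1] @ PP k @ [1] @ PP (k+2)"
proof (induction k)
  case 0
  show ?case by (simp add: numeral_eq_Suc PP_Suc PP0)
next
  case (Suc k)
  have o1: "odd (length (PP (k+2)))" and o2: "odd (length (PP k))" using PP_odd by auto
  have "PP (Suc k + 3) = gen (PP (k+3)) 3" by (simp add: PP_Suc[symmetric])
  also have "\<dots> = gen (PP (k+2) @ [1] @ PP k @ [1] @ PP (k+2)) 3" using Suc by simp
  also have "\<dots> = gen (PP (k+2)) 3 @ [1] @ gen (PP k) 3 @ [1] @ gen (PP (k+2)) 3"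
    using o1 o2 by (simp add: gen_append)
  also have "\<dots> = PP (Suc k + 2) @ [1] @ PP (Suc k) @ [1] @ PP (Suc k + 2)"
    by (simp add: PP_Suc[symmetric])
  finally show ?case .
qed

definition pl where "pl k = length (PP k)"
definition Ll where "Ll k = length (BB k)"

lemma pl_rec: "pl (k+3) = 2 * pl (k+2) + pl k + 2"
  unfolding pl_def by (subst PP_struct) simp

lemma Ll_Suc: "Ll (Suc k) = 2 * Ll k + pl k"
  unfolding Ll_def pl_def by (simp add: BB_Suc)

lemma pl_Ll: "pl (k+2) + 2 = Ll k"
proof (induction k)
  case 0
  have "pl 2 = 9" by (simp add: pl_def numeral_eq_Suc PP_Suc PP0)
  then have "pl (0+2) = 9" by (simp add: numeral_2_eq_2)
  then show ?case using BB0 by (simp add: Ll_def)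
next
  case (Suc k)
  have "pl (Suc k + 2) = 2 * pl (k+2) + pl k + 2" using pl_rec[of k] by (simp add: numeral_eq_Suc)
  then show ?case using Suc by (simp add: Ll_Suc)
qed

lemma Ll_rec: "real (Ll (k+3)) = 2 * real (Ll (k+2)) + real (Ll k) - 2"
proof -
  have "Ll (k+3) = 2 * Ll (k+2) + pl (k+2)" using Ll_Suc[of "k+2"] by (simp add: numeral_eq_Suc)
  then show ?thesis using pl_Ll[of k] by simp
qed

lemma Ll_ge: "Ll k \<ge> Suc k"
proof (induction k)
  case 0 then show ?case using BB0 by (simp add: Ll_def)
next
  case (Suc k) then show ?case by (simp add: Ll_Suc)
qed

lemma alpha_bounds:
  fixes a :: real assumes "a ^ 3 - 2 * a ^ 2 - 1 = 0" shows "2 < a \<and> a < 3"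
proof -
  have eq: "a^2 * (a - 2) = 1" using assms by (simp add: algebra_simps power2_eq_square power3_eq_cube)
  have "a > 2"
  proof (rule ccontr)
    assume "\<not> a > 2"
    then have "a^2 * (a - 2) \<le> 0" by (simp add: mult_nonneg_nonpos)
    then show False using eq by simp
  qed
  moreover have "a < 3"
  proof (rule ccontr)
    assume "\<not> a < 3"
    then have "a^2 \<ge> 3^2" by (intro power_mono) auto
    moreover have "a - 2 \<ge> 1" using \<open>\<not> a < 3\<close> by simp
    ultimately have "a^2 * (a - 2) \<ge> 9 * 1" by (intro mult_mono) auto
    then show False using eq by simp
  qed
  ultimately show ?thesis by simp
qed

lemma unique_root: "\<exists>!x::real. x ^ 3 - 2 * x ^ 2 - 1 = 0" if "\<alpha> ^ 3 - 2 * \<alpha> ^ 2 - 1 = 0" for \<alpha> :: real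
proof (rule ex1I[of _ \<alpha>])
  show "\<alpha> ^ 3 - 2 * \<alpha> ^ 2 - 1 = 0" by fact
  have mono: "x^2*(x-2) < y^2*(y-2)" if "2 < x" "x < y" for x y :: real
  proof -
    have "x^2 < y^2" using that by (intro power_strict_mono) auto
    then show ?thesis using that by (intro mult_strict_mono) auto
  qed
  fix y :: real assume y: "y ^ 3 - 2 * y ^ 2 - 1 = 0"
  have e1: "y^2*(y-2) = 1" using y by (simp add: algebra_simps power2_eq_square power3_eq_cube)
  have e2: "\<alpha>^2*(\<alpha>-2) = 1" using that by (simp add: algebra_simps power2_eq_square power3_eq_cube)
  have "2 < y" "2 < \<alpha>" using alpha_bounds[OF y] alpha_bounds[OF that] by auto
  then show "y = \<alpha>" using mono[of y \<alpha>] mono[of \<alpha> y] e1 e2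
    by (metis linorder_neqE_linordered_idom order_less_irrefl)
qed

lemma ratio_limit:
  fixes \<alpha> :: real
  assumes A: "\<alpha> ^ 3 - 2 * \<alpha> ^ 2 - 1 = 0"
  shows "(\<lambda>k. real (Ll (Suc k)) / real (Ll k)) \<longlonglongrightarrow> \<alpha>"
proof -
  obtain a2: "2 < \<alpha>" and a3: "\<alpha> < 3" using alpha_bounds[OF A] by auto
  define x where "x k = real (Ll k) - 1" for k
  have xr: "x (k+3) = 2 * x (k+2) + x k" for k using Ll_rec[of k] by (simp add: x_def)
  define e where "e k = x (Suc k) - \<alpha> * x k" for k
  define u where "u = \<alpha> - 2"
  have u0: "0 < u" "u < 1" using a2 a3 by (auto simp: u_def)
  have er: "\<alpha> * e (k+2) = - \<alpha> * u * e (k+1) - e k" for k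
  proof -
    have "\<alpha> * (2 - \<alpha>) * e (k+1) - e k - \<alpha> * e (k+2) = (\<alpha>^3 - 2*\<alpha>^2 - 1) * x (k+1)"
      using xr[of k] by (simp add: e_def algebra_simps power2_eq_square power3_eq_cube numeral_eq_Suc)
    then show ?thesis using A by (simp add: u_def algebra_simps)
  qed
  define Q where "Q k = \<alpha> * e (k+1)^2 + \<alpha> * u * e (k+1) * e k + e k ^ 2" for k
  have Qlow: "Q k \<ge> e k ^ 2 / 4" for k
  proof -
    have "\<alpha> * u^2 \<le> 3 * 1"
    proof -
      have "u^2 \<le> 1" using u0 by (simp add: power_le_one)
      then show ?thesis using a3 a2 by (intro mult_mono) auto
    qed
    then have h: "(3/4 - \<alpha> * u^2/4) * e k ^ 2 \<ge> 0" by (intro mult_nonneg_nonneg) auto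
    have h2: "\<alpha> * (e (k+1) + u * e k / 2)^2 \<ge> 0" using a2 by simp
    have "Q k - e k ^ 2 / 4 = \<alpha> * (e (k+1) + u * e k / 2)^2 + (3/4 - \<alpha> * u^2/4) * e k ^ 2"
      by (simp add: Q_def algebra_simps power2_eq_square)
    then show ?thesis using h h2 by linarith
  qed
  have Qstep: "\<alpha> * Q (Suc k) = Q k" for k
  proof -
    have z: "\<alpha> * e (k+2) = - \<alpha> * u * e (k+1) - e k" by (rule er)
    have "\<alpha> * Q (Suc k) = (\<alpha> * e (k+2)) * (\<alpha> * e (k+2) + \<alpha> * u * e (k+1)) + \<alpha> * e (k+1)^2"
      by (simp add: Q_def algebra_simps power2_eq_square)
    also have "\<dots> = Q k" unfolding z by (simp add: Q_def algebra_simps power2_eq_square)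
    finally show ?thesis .
  qed
  have Qdec: "Q k \<le> Q 0" for k
  proof (induction k)
    case 0 then show ?case by simp
  next
    case (Suc k)
    have "Q (Suc k) \<ge> 0" using Qlow[of "Suc k"] by (smt (verit) zero_le_power2 divide_nonneg_pos)
    then have "Q (Suc k) \<le> \<alpha> * Q (Suc k)" using a2 by (simp add: mult_le_cancel_right1)
    then show ?case using Suc Qstep[of k] by simp
  qed
  define C where "C = 2 * sqrt (Q 0)"
  have ebound: "\<bar>e k\<bar> \<le> C" for k
  proof -
    have "e k ^ 2 \<le> 4 * Q 0" using Qlow[of k] Qdec[of k] by simp
    then have "sqrt (e k ^ 2) \<le> sqrt (4 * Q 0)" by (rule real_sqrt_le_mono)
    then show ?thesis by (simp add: C_def real_sqrt_mult)
  qed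
  have C0: "C \<ge> 0" using ebound[of 0] by simp
  have bnd: "norm (real (Ll (Suc k)) / real (Ll k) - \<alpha>) \<le> (C + 2) * inverse (real (Suc k))" for k
  proof -
    have pos: "real (Ll k) \<ge> real (Suc k)" using Ll_ge[of k] by linarith
    have pos0: "real (Ll k) > 0" using pos by linarith
    have eq: "real (Ll (Suc k)) / real (Ll k) - \<alpha> = (e k + 1 - \<alpha>) / real (Ll k)"
      using pos0 by (simp add: e_def x_def field_simps)
    have "\<bar>e k + 1 - \<alpha>\<bar> \<le> C + 2" using ebound[of k] a2 a3 by linarith
    then have "\<bar>e k + 1 - \<alpha>\<bar> / real (Ll k) \<le> (C + 2) / real (Suc k)"
      using pos pos0 C0 by (intro frac_le) auto
    moreover have "norm (real (Ll (Suc k)) / real (Ll k) - \<alpha>) = \<bar>e k + 1 - \<alpha>\<bar> / real (Ll k)"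
      unfolding eq real_norm_def using pos0 by (simp add: abs_divide)
    ultimately show ?thesis by (simp add: divide_inverse)
  qed
  have bnd2: "norm (real (Ll (Suc k)) / real (Ll k) - \<alpha>) \<le> norm (inverse (real (Suc k))) * (C + 2)" for k
    using bnd[of k] by (simp add: mult.commute)
  have "(\<lambda>k. real (Ll (Suc k)) / real (Ll k) - \<alpha>) \<longlonglongrightarrow> 0"
    by (rule tendsto_0_le[OF LIMSEQ_inverse_real_of_nat always_eventually]) (use bnd2 in blast)
  then show ?thesis by (simp add: LIM_zero_iff)
qed

theorem mainTheorem6:
  fixes \<alpha> :: real
  assumes "\<alpha> ^ 3 - 2 * \<alpha> ^ 2 - 1 = 0"
  shows "(\<exists>!x::real. x ^ 3 - 2 * x ^ 2 - 1 = 0)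
         \<and> (\<lambda>n. real (L (Suc n)) / real (L n)) \<longlonglongrightarrow> \<alpha>"
proof
  show "\<exists>!x::real. x ^ 3 - 2 * x ^ 2 - 1 = 0" using unique_root[OF assms] .
  have "(\<lambda>k. real (L (Suc (Suc k))) / real (L (Suc k))) \<longlonglongrightarrow> \<alpha>"
    using ratio_limit[OF assms] by (simp add: L_def B_def Ll_def BB_def)
  then show "(\<lambda>n. real (L (Suc n)) / real (L n)) \<longlonglongrightarrow> \<alpha>"
    by (rule LIMSEQ_imp_Suc)
qed

end
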